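(* Let $N=\{1,\dots,n\}$ with $n\ge 2$ and let $\mathcal{D}=\mathbb{R}^n_+$ be the domain of profiles of inflows. A rule $R:\mathcal{D}\to\mathbb{R}^n_+$ satisfies scale invariance, downstream impartiality, upstream invariance, and balance if and only if it is the Shapley rule, i.e. for each $e\in\mathcal{D}$ and each $i\in N$, $$R_i(e)=\sum_{j\le i}\frac{e_j}{n-j+1}.$$
   Context: Agents $1,\dots,n$ are located along a linear river, lower index meaning more upstream; agent $i$ has river inflow $e_i\ge 0$, and $e=(e_1,\dots,e_n)\in\mathcal{D}=\mathbb{R}^n_+$. An allocation for $e$ is $x\in\mathbb{R}^n_+$ with $\sum_{i=1}^n x_i=\sum_{i=1}^n e_i$ and $\sum_{i=1}^k x_i\le\sum_{i=1}^k e_i$ for each $k=1,\dots,n-1$. A rule is a map $R:\mathcal{D}\to\mathbb{R}^n_+$ assigning to each $e$ an allocation $R(e)$ for $e$. Axioms: Scale invariance: for each $e\in\mathcal{D}$ and each $\gamma\in\mathbb{R}_+$, $R(\gamma e)=\gamma R(e)$. Upstream invariance: for each $e,e'\in\mathcal{D}$ such that $e_i<e'_i$ for some $i\in N$ and $e_j=e'_j$ for all $j\ne i$, we have $R_k(e)=R_k(e')$ for each $k<i$. Downstream impartiality: for each $e,e'\in\mathcal{D}$ such that $e_i<e'_i$ for some $i\in N$ and $e_j=e'_j$ for all $j\ne i$, and for each $k,l>i$ with $e_k=e_l$, we have $R_k(e')-R_k(e)=R_l(e')-R_l(e)$. Balance: for each $e\in\mathcal{D}$ such that $e_i>0$ for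 some $i\in\{1,\dots,n-1\}$ and $e_j=0$ for all $j\ne i$, $R_i(e)=\frac{1}{n-i}\sum_{k>i}R_k(e)$. *)

theory Defs
  imports Main "HOL.Real"
begin

text \<open>A profile of inflows is a function nat => real that is
nonnegative on {1..n} and zero outside {1..n} (the values outside are irrelevant
junk, fixed to 0 so profiles correspond one-to-one to points of R^n_+).\<close>

definition profile :: "nat \<Rightarrow> (nat \<Rightarrow> real) \<Rightarrow> bool" where
  "profile n e \<longleftrightarrow> (\<forall>i\<in>{1..n}. 0 \<le> e i) \<and> (\<forall>i. i \<notin> {1..n} \<longrightarrow> e i = 0)"

definition allocation :: "nat \<Rightarrow> (nat \<Rightarrow> real) \<Rightarrow> (nat \<Rightarrow> real) \<Rightarrow> bool" where
  "allocation n e x \<longleftrightarrow> (\<forall>i\<in>{1..n}. 0 \<le> x i)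
     \<and> (\<Sum>i=1..n. x i) = (\<Sum>i=1..n. e i)
     \<and> (\<forall>k\<in>{1..n-1}. (\<Sum>i=1..k. x i) \<le> (\<Sum>i=1..k. e i))"

definition is_rule :: "nat \<Rightarrow> ((nat \<Rightarrow> real) \<Rightarrow> (nat \<Rightarrow> real)) \<Rightarrow> bool" where
  "is_rule n R \<longleftrightarrow> (\<forall>e. profile n e \<longrightarrow> allocation n e (R e))"

definition scale_invariance :: "nat \<Rightarrow> ((nat \<Rightarrow> real) \<Rightarrow> (nat \<Rightarrow> real)) \<Rightarrow> bool" where
  "scale_invariance n R \<longleftrightarrow> (\<forall>e \<gamma>. profile n e \<longrightarrow> 0 \<le> \<gamma> \<longrightarrow>
     (\<forall>i\<in>{1..n}. R (\<lambda>j. \<gamma> * e j) i = \<gamma> * R e i))"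

definition upstream_invariance :: "nat \<Rightarrow> ((nat \<Rightarrow> real) \<Rightarrow> (nat \<Rightarrow> real)) \<Rightarrow> bool" where
  "upstream_invariance n R \<longleftrightarrow> (\<forall>e e' i. profile n e \<longrightarrow> profile n e' \<longrightarrow> i \<in> {1..n} \<longrightarrow>
     e i < e' i \<longrightarrow> (\<forall>j\<in>{1..n}. j \<noteq> i \<longrightarrow> e j = e' j) \<longrightarrow>
     (\<forall>k\<in>{1..n}. k < i \<longrightarrow> R e k = R e' k))"

definition downstream_impartiality :: "nat \<Rightarrow> ((nat \<Rightarrow> real) \<Rightarrow> (nat \<Rightarrow> real)) \<Rightarrow> bool" where
  "downstream_impartiality n R \<longleftrightarrow> (\<forall>e e' i. profile n e \<longrightarrow> profile n e' \<longrightarrow> i \<in> {1..n} \<longrightarrow>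
     e i < e' i \<longrightarrow> (\<forall>j\<in>{1..n}. j \<noteq> i \<longrightarrow> e j = e' j) \<longrightarrow>
     (\<forall>k\<in>{1..n}. \<forall>l\<in>{1..n}. i < k \<longrightarrow> i < l \<longrightarrow> e k = e l \<longrightarrow>
        R e' k - R e k = R e' l - R e l))"

definition balance :: "nat \<Rightarrow> ((nat \<Rightarrow> real) \<Rightarrow> (nat \<Rightarrow> real)) \<Rightarrow> bool" where
  "balance n R \<longleftrightarrow> (\<forall>e i. profile n e \<longrightarrow> i \<in> {1..n-1} \<longrightarrow> 0 < e i \<longrightarrow>
     (\<forall>j\<in>{1..n}. j \<noteq> i \<longrightarrow> e j = 0) \<longrightarrow>
     R e i = (1 / real (n - i)) * (\<Sum>k\<in>{i<..n}. R e k))"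

definition shapley_rule :: "nat \<Rightarrow> (nat \<Rightarrow> real) \<Rightarrow> nat \<Rightarrow> real" where
  "shapley_rule n e i = (\<Sum>j=1..i. e j / (real n - real j + 1))"

end

theory Submission
  imports Defs
begin


lemma prof_eq:
  assumes "profile n e" "profile n e'" "\<forall>j\<in>{1..n}. e j = e' j"
  shows "e = e'"
proof
  fix j show "e j = e' j" using assms unfolding profile_def by (cases "j \<in> {1..n}") auto
qed

lemma DI_step:
  assumes DI: "downstream_impartiality n R" and pe: "profile n e" and pe': "profile n e'"
    and j: "j \<in> {1..n}" and ag: "\<forall>m. m \<noteq> j \<longrightarrow> e m = e' m"
    and k: "k \<in> {1..n}" and l: "l \<in> {1..n}" and jk: "j < k" and jl: "j < l" and ekl: "e k = e l"
  shows "R e' k - R e k = R e' l - R e l"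
proof -
  consider "e j < e' j" | "e' j < e j" | "e j = e' j" by linarith
  then show ?thesis
  proof cases
    case 1 then show ?thesis using DI pe pe' j ag k l jk jl ekl unfolding downstream_impartiality_def by blast
  next
    case 2
    have "e' k = e' l" using ag ekl jk jl by (metis less_irrefl)
    have "R e k - R e' k = R e l - R e' l"
      using DI pe pe' j ag k l jk jl \<open>e' k = e' l\<close> 2 unfolding downstream_impartiality_def by metis
    then show ?thesis by linarith
  next
    case 3 then have "e = e'" using ag by (metis ext)
    then show ?thesis by simp
  qed
qed

lemma DI_chain:
  assumes DI: "downstream_impartiality n R"
  shows "\<forall>e e'. profile n e \<longrightarrow> profile n e' \<longrightarrow> (\<forall>j\<ge>t. e j = e' j) \<longrightarrow>
    (\<forall>k\<in>{1..n}. \<forall>l\<in>{1..n}. t \<le> k \<longrightarrow> t \<le> l \<longrightarrow> e k = e l \<longrightarrow> R e' k - R e k = R e' l - R e l)"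
proof (induction t)
  case 0
  then show ?case by (metis ext le0 diff_self)
next
  case (Suc t)
  show ?case
  proof (intro allI impI ballI)
    fix e e' k l
    assume pe: "profile n e" and pe': "profile n e'" and ag: "\<forall>j\<ge>Suc t. e j = e' j"
      and k: "k \<in> {1..n}" and l: "l \<in> {1..n}" and tk: "Suc t \<le> k" and tl: "Suc t \<le> l" and ekl: "e k = e l"
    define mid where "mid = e'(t := e t)"
    have pm: "profile n mid" using pe pe' unfolding profile_def mid_def by auto
    have agm: "\<forall>j\<ge>t. e j = mid j" using ag unfolding mid_def by (auto simp: Suc_le_eq)
    have h1: "R mid k - R e k = R mid l - R e l" using Suc.IH pe pm agm k l tk tl ekl by auto
    have h2: "R e' k - R mid k = R e' l - R mid l"
    proof (cases "t \<in> {1..n}")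
      case True
      have "mid k = mid l" using ekl ag tk tl unfolding mid_def by auto
      then show ?thesis using DI_step[OF DI pm pe' True _ k l] tk tl unfolding mid_def by auto
    next
      case False
      then have "e t = 0" "e' t = 0" using pe pe' unfolding profile_def by auto
      then have "mid = e'" unfolding mid_def by auto
      then show ?thesis by simp
    qed
    show "R e' k - R e k = R e' l - R e l" using h1 h2 by linarith
  qed
qed

lemma UI_chain:
  assumes UI: "upstream_invariance n R" and k: "k \<in> {1..n}"
  shows "\<forall>e e'. profile n e \<longrightarrow> profile n e' \<longrightarrow> (\<forall>j. j \<le> k \<or> k + m < j \<longrightarrow> e j = e' j) \<longrightarrow> R e k = R e' k"
proof (induction m)
  case 0
  then show ?case by (metis ext not_le add_0_right)
next
  case (Suc m)
  show ?case
  proof (intro allI impI)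
    fix e e'
    assume pe: "profile n e" and pe': "profile n e'" and ag: "\<forall>j. j \<le> k \<or> k + Suc m < j \<longrightarrow> e j = e' j"
    define p where "p = Suc (k + m)"
    define mid where "mid = e'(p := e p)"
    have pm: "profile n mid" using pe pe' unfolding profile_def mid_def by auto
    have agm: "\<forall>j. j \<le> k \<or> k + m < j \<longrightarrow> e j = mid j" using ag unfolding mid_def p_def by auto
    have h1: "R e k = R mid k" using Suc.IH pe pm agm by blast
    have agp: "\<forall>j. j \<noteq> p \<longrightarrow> mid j = e' j" unfolding mid_def by auto
    have kp: "k < p" unfolding p_def by simp
    have h2: "R mid k = R e' k"
    proof (cases "p \<in> {1..n}")
      case True
      consider "mid p < e' p" | "e' p < mid p" | "mid p = e' p" by linarith
      then show ?thesis
      proof cases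
        case 1 then show ?thesis using UI pm pe' True agp k kp unfolding upstream_invariance_def by blast
      next
        case 2 then show ?thesis using UI pm pe' True agp k kp unfolding upstream_invariance_def by metis
      next
        case 3 then have "mid = e'" using agp by (metis ext)
        then show ?thesis by simp
      qed
    next
      case False
      then have "e p = 0" "e' p = 0" using pe pe' unfolding profile_def by auto
      then have "mid = e'" unfolding mid_def by auto
      then show ?thesis by simp
    qed
    show "R e k = R e' k" using h1 h2 by simp
  qed
qed

lemma UI_gen:
  assumes UI: "upstream_invariance n R" and k: "k \<in> {1..n}" and pe: "profile n e" and pe': "profile n e'"
    and ag: "\<forall>j\<le>k. e j = e' j"
  shows "R e k = R e' k"
proof -
  have "\<forall>j. j \<le> k \<or> k + n < j \<longrightarrow> e j = e' j"
    using ag pe pe' unfolding profile_def by auto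
  then show ?thesis using UI_chain[OF UI k, of n] pe pe' by blast
qed



lemma zero_R:
  assumes "is_rule n R" "k \<in> {1..n}"
  shows "R (\<lambda>_. 0) k = 0"
proof -
  have p: "profile n (\<lambda>_. 0)" unfolding profile_def by auto
  have a: "allocation n (\<lambda>_. 0) (R (\<lambda>_. 0))" using assms p unfolding is_rule_def by blast
  then have "(\<Sum>i=1..n. R (\<lambda>_. 0) i) = 0" "\<forall>i\<in>{1..n}. 0 \<le> R (\<lambda>_. 0) i" unfolding allocation_def by auto
  then show ?thesis using sum_nonneg_eq_0_iff[of "{1..n}" "R (\<lambda>_. 0)"] assms(2) by auto
qed

lemma ruleD:
  assumes "is_rule n R" "profile n e"
  shows "\<forall>i\<in>{1..n}. 0 \<le> R e i" "(\<Sum>i=1..n. R e i) = (\<Sum>i=1..n. e i)"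
    "\<forall>k\<in>{1..n-1}. (\<Sum>i=1..k. R e i) \<le> (\<Sum>i=1..k. e i)"
proof -
  have "allocation n e (R e)" using assms unfolding is_rule_def by simp
  then show "\<forall>i\<in>{1..n}. 0 \<le> R e i" "(\<Sum>i=1..n. R e i) = (\<Sum>i=1..n. e i)"
    "\<forall>k\<in>{1..n-1}. (\<Sum>i=1..k. R e i) \<le> (\<Sum>i=1..k. e i)" unfolding allocation_def by simp_all
qed

lemma prefix_zero:
  assumes "is_rule n R" "profile n e" "k \<in> {1..n-1}" "\<forall>j\<in>{1..k}. e j = 0" "j \<in> {1..k}"
  shows "R e j = 0"
proof -
  have k: "k \<le> n" "1 \<le> k" using assms(3) by auto
  have "(\<Sum>i=1..k. e i) = 0" using assms(4) by simp
  moreover have "(\<Sum>i=1..k. R e i) \<le> (\<Sum>i=1..k. e i)" using ruleD(3)[OF assms(1,2)] assms(3) by blast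
  ultimately have le: "(\<Sum>i=1..k. R e i) \<le> 0" by simp
  have nn: "\<forall>i\<in>{1..k}. 0 \<le> R e i" using ruleD(1)[OF assms(1,2)] k by auto
  then have "0 \<le> (\<Sum>i=1..k. R e i)" by (intro sum_nonneg) blast
  then have "(\<Sum>i=1..k. R e i) = 0" using le by linarith
  then show ?thesis using sum_nonneg_eq_0_iff[of "{1..k}" "R e"] nn assms(5) by auto
qed

lemma split_sum:
  fixes f :: "nat \<Rightarrow> real"
  assumes "1 \<le> i" "i \<le> n"
  shows "(\<Sum>j=1..n. f j) = (\<Sum>j\<in>{1..<i}. f j) + (\<Sum>j=i..n. f j)"
proof -
  have "{1..n} = {1..<i} \<union> {i..n}" using assms by auto
  then show ?thesis by (simp add: sum.union_disjoint ivl_disj_int)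
qed

lemma balD:
  assumes "balance n R" "profile n e" "i \<in> {1..n-1}" "0 < e i" "\<forall>j\<in>{1..n}. j \<noteq> i \<longrightarrow> e j = 0"
  shows "R e i = (1 / real (n - i)) * (\<Sum>k\<in>{i<..n}. R e k)"
  using assms unfolding balance_def by blast

lemma siD:
  assumes "scale_invariance n R" "profile n e" "0 \<le> g" "i \<in> {1..n}"
  shows "R (\<lambda>j. g * e j) i = g * R e i"
  using assms unfolding scale_invariance_def by blast

lemma single1:
  assumes n2: "2 \<le> n" and rule: "is_rule n R" and DI: "downstream_impartiality n R"
    and B: "balance n R" and i: "i \<in> {1..n}" and k: "k \<in> {i..n}"
  shows "R (\<lambda>j. if j = i then 1 else 0) k = 1 / (real n - real i + 1)"
proof -
  define s where "s = (\<lambda>j. if j = i then 1 else (0::real))"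
  have ps: "profile n s" using i unfolding profile_def s_def by auto
  have pz: "profile n (\<lambda>_. 0)" unfolding profile_def by auto
  have low: "R s j = 0" if "j \<in> {1..<i}" for j
  proof -
    have "i - 1 \<in> {1..n-1}" "\<forall>j\<in>{1..i-1}. s j = 0" "j \<in> {1..i-1}" using that i unfolding s_def by auto
    then show ?thesis using prefix_zero[OF rule ps, of "i - 1" j] by blast
  qed
  have up: "R s m = R s n" if "m \<in> {i<..n}" for m
  proof -
    have "\<forall>j\<in>{1..n}. j \<noteq> i \<longrightarrow> (\<lambda>_. 0::real) j = s j" "(\<lambda>_. 0::real) i < s i"
      "m \<in> {1..n}" "n \<in> {1..n}" "i < m" "i < n" "(\<lambda>_. 0::real) m = (\<lambda>_. 0::real) n"
      using that i unfolding s_def by auto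
    then have "R s m - R (\<lambda>_. 0) m = R s n - R (\<lambda>_. 0) n"
      using DI_step[OF DI pz ps i, of m n] by (auto simp: s_def)
    then show ?thesis using zero_R[OF rule, of m] zero_R[OF rule, of n] that n2 by auto
  qed
  have upsum: "(\<Sum>j\<in>{i<..n}. R s j) = real (n - i) * R s n"
  proof -
    have "(\<Sum>j\<in>{i<..n}. R s j) = (\<Sum>j\<in>{i<..n}. R s n)" by (intro sum.cong refl) (rule up)
    then show ?thesis by simp
  qed
  have tot: "(\<Sum>j=1..n. R s j) = 1"
  proof -
    have "(\<Sum>j=1..n. R s j) = (\<Sum>j=1..n. s j)" using ruleD(2)[OF rule ps] .
    also have "\<dots> = 1" using i unfolding s_def by (simp add: sum.delta)
    finally show ?thesis .
  qed
  have "(\<Sum>j=1..n. R s j) = (\<Sum>j\<in>{1..<i}. R s j) + (\<Sum>j=i..n. R s j)" using split_sum[of i n "R s"] i by simp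
  also have "(\<Sum>j\<in>{1..<i}. R s j) = 0" using low by simp
  also have "{i..n} = insert i {i<..n}" using i by auto
  also have "(\<Sum>j\<in>insert i {i<..n}. R s j) = R s i + (\<Sum>j\<in>{i<..n}. R s j)" by simp
  also have "(\<Sum>j\<in>{i<..n}. R s j) = real (n - i) * R s n" using upsum .
  finally have eq: "R s i + real (n - i) * R s n = 1" using tot by simp
  have rn: "real (n - i) = real n - real i" using i by auto
  show ?thesis
  proof (cases "i < n")
    case True
    have "R s i = (1 / real (n - i)) * (\<Sum>j\<in>{i<..n}. R s j)"
      by (rule balD[OF B ps]) (use i True in \<open>auto simp: s_def\<close>)
    also have "(\<Sum>j\<in>{i<..n}. R s j) = real (n - i) * R s n" using upsum .
    finally have "R s i = R s n" using True by simp
    then have "(real n - real i + 1) * R s n = 1" using eq rn by (simp add: algebra_simps)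
    then have "R s n = 1 / (real n - real i + 1)" using True by (simp add: field_simps)
    moreover have "R s k = R s n"
    proof (cases "k = i")
      case True then show ?thesis using \<open>R s i = R s n\<close> by simp
    next
      case False then have "k \<in> {i<..n}" using k by auto
      then show ?thesis by (rule up)
    qed
    ultimately show ?thesis unfolding s_def by simp
  next
    case False
    then have "i = n" "k = n" using i k by auto
    then show ?thesis using eq unfolding s_def by simp
  qed
qed

lemma single:
  assumes n2: "2 \<le> n" and rule: "is_rule n R" and DI: "downstream_impartiality n R"
    and B: "balance n R" and SI: "scale_invariance n R" and i: "i \<in> {1..n}" and k: "k \<in> {i..n}"
    and c: "0 \<le> c"
  shows "R (\<lambda>j. if j = i then c else 0) k = c / (real n - real i + 1)"
proof -
  define s where "s = (\<lambda>j. if j = i then 1 else (0::real))"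
  have ps: "profile n s" using i unfolding profile_def s_def by auto
  have "(\<lambda>j. c * s j) = (\<lambda>j. if j = i then c else 0)" unfolding s_def by auto
  moreover have "R (\<lambda>j. c * s j) k = c * R s k" using siD[OF SI ps c] k i by auto
  ultimately show ?thesis using single1[OF n2 rule DI B i k] unfolding s_def by simp
qed

lemma ident:
  assumes "1 \<le> i" "i \<le> n"
  shows "(real n - real i + 1) * shapley_rule n e i + (\<Sum>m\<in>{1..<i}. shapley_rule n e m) = (\<Sum>j=1..i. e j)"
  using assms
proof (induction i)
  case 0 then show ?case by simp
next
  case (Suc i)
  show ?case
  proof (cases "i = 0")
    case True
    then show ?thesis using Suc.prems by (simp add: shapley_rule_def)
  next
    case False
    then have IH: "(real n - real i + 1) * shapley_rule n e i + (\<Sum>m\<in>{1..<i}. shapley_rule n e m) = (\<Sum>j=1..i. e j)"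
      using Suc by auto
    have ne: "real n - real i \<noteq> 0" using Suc.prems by auto
    have s1: "shapley_rule n e (Suc i) = shapley_rule n e i + e (Suc i) / (real n - real i)"
      unfolding shapley_rule_def by simp
    have s2: "(\<Sum>m\<in>{1..<Suc i}. shapley_rule n e m) = (\<Sum>m\<in>{1..<i}. shapley_rule n e m) + shapley_rule n e i"
      using False by simp
    have s3: "(\<Sum>j=1..Suc i. e j) = (\<Sum>j=1..i. e j) + e (Suc i)" by simp
    have c: "real n - real (Suc i) + 1 = real n - real i" by simp
    have d: "(real n - real i) * (e (Suc i) / (real n - real i)) = e (Suc i)" using ne by simp
    have IH': "(real n - real i) * shapley_rule n e i + shapley_rule n e i + (\<Sum>m\<in>{1..<i}. shapley_rule n e m) = (\<Sum>j=1..i. e j)"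
      using IH by (simp add: distrib_right)
    have "(real n - real i) * (shapley_rule n e i + e (Suc i) / (real n - real i))
        = (real n - real i) * shapley_rule n e i + e (Suc i)" using d by (simp add: distrib_left)
    then show ?thesis unfolding s1 s2 s3 c using IH' by linarith
  qed
qed



lemma shapley_agree:
  assumes "\<forall>j\<in>{1..m}. e j = e' j"
  shows "shapley_rule n e m = shapley_rule n e' m"
  unfolding shapley_rule_def using assms by (intro sum.cong refl) auto

lemma main_dir:
  assumes n2: "2 \<le> n" and rule: "is_rule n R" and SI: "scale_invariance n R"
    and DI: "downstream_impartiality n R" and UI: "upstream_invariance n R" and B: "balance n R"
  shows "i \<in> {1..n} \<Longrightarrow> profile n e \<Longrightarrow> R e i = shapley_rule n e i"
proof (induction i arbitrary: e rule: less_induct)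
  case (less i)
  note i = less.prems(1) and pe = less.prems(2)
  have IH: "R e' j = shapley_rule n e' j" if "j \<in> {1..<i}" "profile n e'" for j e'
    using less.IH that i by auto
  define c where "c = e i"
  have c0: "0 \<le> c" using pe i unfolding profile_def c_def by auto
  have e0: "e 0 = 0" using pe unfolding profile_def by auto
  define q where "q = (\<lambda>j. if j < i then e j else if j \<le> n then c else 0)"
  define r where "r = (\<lambda>j. if i \<le> j \<and> j \<le> n then c else (0::real))"
  define s where "s = (\<lambda>j. if j = i then c else (0::real))"
  have pq: "profile n q" using pe c0 i unfolding profile_def q_def by auto
  have pr: "profile n r" using c0 i unfolding profile_def r_def by auto
  have ps: "profile n s" using c0 i unfolding profile_def s_def by auto
  have Req: "R e i = R q i" by (rule UI_gen[OF UI i pe pq]) (use i in \<open>auto simp: q_def c_def\<close>)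
  have Rr: "R r i = c / (real n - real i + 1)"
  proof -
    have "R r i = R s i" by (rule UI_gen[OF UI i pr ps]) (use i in \<open>auto simp: r_def s_def\<close>)
    also have "\<dots> = c / (real n - real i + 1)" unfolding s_def
      by (rule single[OF n2 rule DI B SI i _ c0]) (use i in auto)
    finally show ?thesis .
  qed
  define D where "D = R q i - R r i"
  have agrq: "\<forall>j\<ge>i. r j = q j" unfolding r_def q_def by auto
  have Dk: "R q k = R r k + D" if "k \<in> {i..n}" for k
  proof -
    have ch: "\<forall>k\<in>{1..n}. \<forall>l\<in>{1..n}. i \<le> k \<longrightarrow> i \<le> l \<longrightarrow> r k = r l \<longrightarrow> R q k - R r k = R q l - R r l"
      using DI_chain[OF DI, of i] pr pq agrq by blast
    have "r k = r i" using that i by (simp add: r_def)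
    then have "R q k - R r k = R q i - R r i" using ch that i by auto
    then show ?thesis unfolding D_def by linarith
  qed
  have lowq: "R q j = shapley_rule n e j" if "j \<in> {1..<i}" for j
  proof -
    have "R q j = shapley_rule n q j" using IH that pq by blast
    also have "\<dots> = shapley_rule n e j" by (rule shapley_agree) (use that in \<open>auto simp: q_def\<close>)
    finally show ?thesis .
  qed
  have lowr: "R r j = 0" if "j \<in> {1..<i}" for j
  proof -
    have "R r j = shapley_rule n r j" using IH that pr by blast
    also have "\<dots> = 0" unfolding shapley_rule_def using that by (intro sum.neutral) (auto simp: r_def)
    finally show ?thesis .
  qed
  have i1: "1 \<le> i" "i \<le> n" using i by auto
  have cardin: "real (card {i..n}) = real n - real i + 1" using i1 by (simp add: of_nat_diff)
  have sq: "(\<Sum>j=1..n. R q j) = (\<Sum>j=1..n. q j)" using ruleD(2)[OF rule pq] .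
  have sr: "(\<Sum>j=1..n. R r j) = (\<Sum>j=1..n. r j)" using ruleD(2)[OF rule pr] .
  have a1: "(\<Sum>j=1..n. R q j) = (\<Sum>j\<in>{1..<i}. shapley_rule n e j) + (\<Sum>j=i..n. R r j) + (real n - real i + 1) * D"
  proof -
    have "(\<Sum>j=1..n. R q j) = (\<Sum>j\<in>{1..<i}. R q j) + (\<Sum>j=i..n. R q j)" using split_sum[OF i1] .
    also have "(\<Sum>j\<in>{1..<i}. R q j) = (\<Sum>j\<in>{1..<i}. shapley_rule n e j)" by (intro sum.cong refl lowq)
    also have "(\<Sum>j=i..n. R q j) = (\<Sum>j=i..n. R r j + D)" by (intro sum.cong refl Dk)
    also have "\<dots> = (\<Sum>j=i..n. R r j) + (real n - real i + 1) * D" using cardin by (simp add: sum.distrib)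
    finally show ?thesis by simp
  qed
  have a2: "(\<Sum>j=1..n. R r j) = (\<Sum>j=i..n. R r j)"
  proof -
    have "(\<Sum>j=1..n. R r j) = (\<Sum>j\<in>{1..<i}. R r j) + (\<Sum>j=i..n. R r j)" using split_sum[OF i1] .
    also have "(\<Sum>j\<in>{1..<i}. R r j) = 0" by (intro sum.neutral) (use lowr in auto)
    finally show ?thesis by simp
  qed
  have a3: "(\<Sum>j=1..n. q j) = (\<Sum>j\<in>{1..<i}. e j) + (real n - real i + 1) * c"
  proof -
    have "(\<Sum>j=1..n. q j) = (\<Sum>j\<in>{1..<i}. q j) + (\<Sum>j=i..n. q j)" using split_sum[OF i1] .
    also have "(\<Sum>j\<in>{1..<i}. q j) = (\<Sum>j\<in>{1..<i}. e j)" by (intro sum.cong refl) (auto simp: q_def)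
    also have "(\<Sum>j=i..n. q j) = (\<Sum>j=i..n. c)" by (intro sum.cong refl) (auto simp: q_def)
    also have "\<dots> = (real n - real i + 1) * c" using cardin by simp
    finally show ?thesis .
  qed
  have a4: "(\<Sum>j=1..n. r j) = (real n - real i + 1) * c"
  proof -
    have "(\<Sum>j=1..n. r j) = (\<Sum>j\<in>{1..<i}. r j) + (\<Sum>j=i..n. r j)" using split_sum[OF i1] .
    also have "(\<Sum>j\<in>{1..<i}. r j) = 0" by (intro sum.neutral) (auto simp: r_def)
    also have "(\<Sum>j=i..n. r j) = (\<Sum>j=i..n. c)" by (intro sum.cong refl) (auto simp: r_def)
    also have "\<dots> = (real n - real i + 1) * c" using cardin by simp
    finally show ?thesis by simp
  qed
  have key: "(\<Sum>j\<in>{1..<i}. shapley_rule n e j) + (real n - real i + 1) * D = (\<Sum>j\<in>{1..<i}. e j)"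
    using a1 a2 a3 a4 sq sr by linarith
  have id: "(real n - real i + 1) * shapley_rule n e i + (\<Sum>m\<in>{1..<i}. shapley_rule n e m) = (\<Sum>j\<in>{1..<i}. e j) + c"
  proof -
    have "(\<Sum>j=1..i. e j) = (\<Sum>j\<in>{1..<i}. e j) + c"
      using split_sum[of i i e] i1 unfolding c_def by simp
    then show ?thesis using ident[OF i1] by simp
  qed
  have pos: "real n - real i + 1 > 0" using i1 by simp
  have "(real n - real i + 1) * shapley_rule n e i = (real n - real i + 1) * D + c" using key id by linarith
  also have "\<dots> = (real n - real i + 1) * R e i"
    using Req Rr pos unfolding D_def by (simp add: field_simps)
  finally show ?case using pos by simp
qed



lemma shapley_diff:
  assumes i: "i \<in> {1..n}" and ag: "\<forall>j\<in>{1..n}. j \<noteq> i \<longrightarrow> e j = e' j" and ik: "i \<le> k" and kn: "k \<le> n"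
  shows "shapley_rule n e' k - shapley_rule n e k = (e' i - e i) / (real n - real i + 1)"
proof -
  have "shapley_rule n e' k - shapley_rule n e k = (\<Sum>j=1..k. e' j / (real n - real j + 1) - e j / (real n - real j + 1))"
    unfolding shapley_rule_def by (simp add: sum_subtractf)
  also have "\<dots> = (\<Sum>j=1..k. if j = i then (e' i - e i) / (real n - real i + 1) else 0)"
  proof (intro sum.cong refl)
    fix j assume j: "j \<in> {1..k}"
    show "e' j / (real n - real j + 1) - e j / (real n - real j + 1) = (if j = i then (e' i - e i) / (real n - real i + 1) else 0)"
    proof (cases "j = i")
      case True then show ?thesis by (simp add: diff_divide_distrib)
    next
      case False then have "e j = e' j" using ag j kn by auto
      then show ?thesis using False by simp
    qed
  qed
  also have "\<dots> = (e' i - e i) / (real n - real i + 1)" using i ik by (simp add: sum.delta)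
  finally show ?thesis .
qed

lemma shapley_single:
  assumes pe: "profile n e" and ag: "\<forall>j\<in>{1..n}. j \<noteq> i \<longrightarrow> e j = 0" and i: "1 \<le> i" and m: "m \<le> n"
  shows "shapley_rule n e m = (if i \<le> m then e i / (real n - real i + 1) else 0)"
proof -
  have "shapley_rule n e m = (\<Sum>j=1..m. if j = i then e i / (real n - real i + 1) else 0)"
    unfolding shapley_rule_def
  proof (intro sum.cong refl)
    fix j assume j: "j \<in> {1..m}"
    then show "e j / (real n - real j + 1) = (if j = i then e i / (real n - real i + 1) else 0)"
      using ag m by auto
  qed
  also have "\<dots> = (if i \<le> m then e i / (real n - real i + 1) else 0)" using i by (simp add: sum.delta)
  finally show ?thesis .
qed

lemma conv_dir:
  assumes n2: "2 \<le> n" and H: "\<forall>e. profile n e \<longrightarrow> (\<forall>i\<in>{1..n}. R e i = shapley_rule n e i)"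
  shows "scale_invariance n R \<and> downstream_impartiality n R \<and> upstream_invariance n R \<and> balance n R"
proof (intro conjI)
  show "scale_invariance n R" unfolding scale_invariance_def
  proof (intro allI impI ballI)
    fix e and g :: real and i assume pe: "profile n e" and g: "0 \<le> g" and i: "i \<in> {1..n}"
    have pg: "profile n (\<lambda>j. g * e j)" using pe g unfolding profile_def by auto
    have "R (\<lambda>j. g * e j) i = shapley_rule n (\<lambda>j. g * e j) i" using H pg i by blast
    also have "\<dots> = g * shapley_rule n e i" unfolding shapley_rule_def by (simp add: sum_distrib_left)
    also have "\<dots> = g * R e i" using H pe i by simp
    finally show "R (\<lambda>j. g * e j) i = g * R e i" .
  qed
next
  show "downstream_impartiality n R" unfolding downstream_impartiality_def
  proof (intro allI impI ballI)
    fix e e' i k l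
    assume pe: "profile n e" and pe': "profile n e'" and i: "i \<in> {1..n}" and lt: "e i < e' i"
      and ag: "\<forall>j\<in>{1..n}. j \<noteq> i \<longrightarrow> e j = e' j" and k: "k \<in> {1..n}" and l: "l \<in> {1..n}"
      and ik: "i < k" and il: "i < l" and ekl: "e k = e l"
    have "R e' k - R e k = shapley_rule n e' k - shapley_rule n e k" using H pe pe' k by simp
    also have "\<dots> = (e' i - e i) / (real n - real i + 1)" using shapley_diff[OF i ag] ik k by simp
    also have "\<dots> = shapley_rule n e' l - shapley_rule n e l" using shapley_diff[OF i ag] il l by simp
    also have "\<dots> = R e' l - R e l" using H pe pe' l by simp
    finally show "R e' k - R e k = R e' l - R e l" .
  qed
next
  show "upstream_invariance n R" unfolding upstream_invariance_def
  proof (intro allI impI ballI)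
    fix e e' i k
    assume pe: "profile n e" and pe': "profile n e'" and i: "i \<in> {1..n}" and lt: "e i < e' i"
      and ag: "\<forall>j\<in>{1..n}. j \<noteq> i \<longrightarrow> e j = e' j" and k: "k \<in> {1..n}" and ki: "k < i"
    have "R e k = shapley_rule n e k" using H pe k by simp
    also have "\<dots> = shapley_rule n e' k" by (rule shapley_agree) (use ag ki k in auto)
    also have "\<dots> = R e' k" using H pe' k by simp
    finally show "R e k = R e' k" .
  qed
next
  show "balance n R" unfolding balance_def
  proof (intro allI impI)
    fix e i assume pe: "profile n e" and i: "i \<in> {1..n-1}" and pos: "0 < e i"
      and ag: "\<forall>j\<in>{1..n}. j \<noteq> i \<longrightarrow> e j = 0"
    have i1: "1 \<le> i" "i < n" using i n2 by auto
    define x where "x = e i / (real n - real i + 1)"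
    have "R e i = x" using H pe i1 shapley_single[OF pe ag i1(1), of i] unfolding x_def by simp
    moreover have "(\<Sum>k\<in>{i<..n}. R e k) = (\<Sum>k\<in>{i<..n}. x)"
    proof (intro sum.cong refl)
      fix k assume k: "k \<in> {i<..n}"
      then show "R e k = x" using H pe i1 shapley_single[OF pe ag i1(1), of k] unfolding x_def by auto
    qed
    moreover have "real (n - i) > 0" using i1 by simp
    ultimately show "R e i = 1 / real (n - i) * (\<Sum>k\<in>{i<..n}. R e k)" by simp
  qed
qed

theorem theorem1:
  fixes n :: nat and R :: "(nat \<Rightarrow> real) \<Rightarrow> (nat \<Rightarrow> real)"
  assumes "2 \<le> n" and "is_rule n R"
  shows "(scale_invariance n R \<and> downstream_impartiality n R \<and> upstream_invariance n R \<and> balance n R)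
    \<longleftrightarrow> (\<forall>e. profile n e \<longrightarrow> (\<forall>i\<in>{1..n}. R e i = shapley_rule n e i))"
proof
  assume "scale_invariance n R \<and> downstream_impartiality n R \<and> upstream_invariance n R \<and> balance n R"
  then show "\<forall>e. profile n e \<longrightarrow> (\<forall>i\<in>{1..n}. R e i = shapley_rule n e i)"
    using main_dir[OF assms] by blast
next
  assume "\<forall>e. profile n e \<longrightarrow> (\<forall>i\<in>{1..n}. R e i = shapley_rule n e i)"
  then show "scale_invariance n R \<and> downstream_impartiality n R \<and> upstream_invariance n R \<and> balance n R"
    using conv_dir[OF assms(1)] by blast
qed

end
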